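(* In the setting below, there exists a sequence $t_n\to\infty$ such that $\varphi_{t_n}$ converges almost everywhere on $A$ to a finite function $\varphi$.
   Context: Setting: $d\ge2$, $A\subset\mathbb{R}^d$ compact convex, $\mu=\varrho_0\,dx$ a probability measure on $A$ equivalent to Lebesgue measure on $A$, $B_r=\{|x|\le r\}$, $\nu=\varrho_1\,dx$ a probability measure on $B_r$ equivalent to Lebesgue measure on $B_r$. For $t\ge0$ let $S_t(x)=x|x|^t$ and let $W_t$ be the convex function on $A$ such that $\nabla W_t$ is the (Brenier) optimal transport map for quadratic cost pushing $\mu$ forward to $\nu\circ S_t^{-1}$, normalized by $\min_A W_t=0$. Define $\varphi_t\ge0$ by $W_t=\frac{1}{t+2}\varphi_t^{t+2}$. *)

theory Defs
  imports "HOL-Probability.Probability"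
begin

definition S_pow :: "real \<Rightarrow> 'a::euclidean_space \<Rightarrow> 'a" where
  "S_pow t x = (norm x powr t) *\<^sub>R x"

text \<open>W is a convex function on A whose gradient (defined mu-a.e.) is a transport map
  pushing mu = rho0 dx forward to the image of nu = rho1 dx under S_t, i.e. (by Brenier's
  theorem) W is the Brenier potential of the quadratic optimal transport problem;
  normalised so that min over A of W is 0.\<close>
definition brenier_potential ::
  "'a::euclidean_space set \<Rightarrow> ('a \<Rightarrow> real) \<Rightarrow> ('a \<Rightarrow> real) \<Rightarrow> real \<Rightarrow> ('a \<Rightarrow> real) \<Rightarrow> bool" where
  "brenier_potential A rho0 rho1 t W \<longleftrightarrow>
     convex_on A W \<and>
     (\<forall>x\<in>A. 0 \<le> W x) \<and> (\<exists>x\<in>A. W x = 0) \<and>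
     (\<exists>G :: 'a \<Rightarrow> 'a.
        G \<in> borel_measurable (density lebesgue (\<lambda>x. ennreal (rho0 x))) \<and>
        (AE x in density lebesgue (\<lambda>x. ennreal (rho0 x)).
            (W has_derivative (\<lambda>h. G x \<bullet> h)) (at x)) \<and>
        distr (density lebesgue (\<lambda>x. ennreal (rho0 x))) borel G =
        distr (density lebesgue (\<lambda>x. ennreal (rho1 x))) borel (S_pow t))"

text \<open>phi_t \<ge> 0 defined by W_t = phi_t^(t+2)/(t+2).\<close>
definition phi_of :: "('a \<Rightarrow> real) \<Rightarrow> real \<Rightarrow> 'a \<Rightarrow> real" where
  "phi_of W t x = ((t + 2) * W x) powr (1 / (t + 2))"

end

theory Submission
  imports Defs "HOL-Library.Diagonal_Subsequence"
begin


lemma diag_conv: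
  fixes g :: "nat \<Rightarrow> nat \<Rightarrow> real"
  assumes bdd: "\<And>k n. \<bar>g k n\<bar> \<le> B"
  shows "\<exists>s. strict_mono s \<and> (\<forall>k. convergent (\<lambda>n. g k (s n)))"
proof -
  let ?P = "\<lambda>k. \<lambda>s. convergent (\<lambda>n. g k (s n))"
  interpret nat: subseqs ?P
  proof (unfold convergent_def, unfold subseqs_def, auto)
    fix k :: nat and s :: "nat \<Rightarrow> nat" assume s: "strict_mono s"
    have "\<And>n. g k (s n) \<in> {-B..B}"
      using bdd by (simp add: abs_le_iff minus_le_iff)
    then have "\<exists>l s'. strict_mono s' \<and> ((\<lambda>n. g k (s n)) \<circ> s') \<longlonglongrightarrow> l"
      using compact_Icc compact_imp_seq_compact seq_compactE by metis
    thus "\<exists>s'. strict_mono (s'::nat\<Rightarrow>nat) \<and> (\<exists>l. (\<lambda>n. g k (s (s' n))) \<longlonglongrightarrow> l)"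
      by (auto simp: comp_def)
  qed
  define d where "d = nat.diagseq"
  have subseq: "strict_mono d"
    unfolding d_def using nat.subseq_diagseq by auto
  have "?P k d" for k
  proof -
    have Pn_seqseq: "?P k (nat.seqseq (Suc k))"
      by (rule nat.seqseq_holds)
    have 1: "(\<lambda>n. g k ((nat.seqseq (Suc k) \<circ> (\<lambda>n. nat.fold_reduce (Suc k) n
      (Suc k + n))) n)) = (\<lambda>n. g k (nat.seqseq (Suc k) n)) \<circ>
      (\<lambda>n. nat.fold_reduce (Suc k) n (Suc k + n))"
      by auto
    have 2: "?P k (d \<circ> ((+) (Suc k)))"
      unfolding d_def nat.diagseq_seqseq 1
      by (intro convergent_subseq_convergent Pn_seqseq nat.subseq_diagonal_rest)
    then obtain L where 3: "(\<lambda>na. g k (d (na + Suc k))) \<longlonglongrightarrow> L"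
      by (auto simp: add.commute dest: convergentD)
    then have "(\<lambda>n. g k (d n)) \<longlonglongrightarrow> L"
      by (rule LIMSEQ_offset)
    then show ?thesis
      by (auto simp: convergent_def)
  qed
  with subseq show ?thesis by blast
qed

lemma conv_decide:
  fixes X :: "nat \<Rightarrow> real"
  assumes b: "\<And>n. 0 \<le> X n \<and> X n \<le> M"
    and dec: "\<And>c. c \<in> \<rat> \<Longrightarrow> (\<forall>\<^sub>F n in sequentially. X n < c) \<or> (\<forall>\<^sub>F n in sequentially. c \<le> X n)"
  shows "convergent X"
proof -
  have le: "liminf X \<le> limsup X" by (simp add: Liminf_le_Limsup)
  have eq: "liminf X = limsup X"
  proof (rule ccontr)
    assume "liminf X \<noteq> limsup X"
    with le have "liminf X < limsup X" by simp
    then obtain z1 where z1: "liminf X < ereal z1" "ereal z1 < limsup X" using ereal_dense2 by blast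
    then obtain z2 where z2: "ereal z1 < ereal z2" "ereal z2 < limsup X" using ereal_dense2 by blast
    then have "z1 < z2" by simp
    then obtain c where c: "c \<in> \<rat>" "z1 < c" "c < z2" using Rats_dense_in_real by blast
    from dec[OF c(1)] show False
    proof
      assume "\<forall>\<^sub>F n in sequentially. X n < c"
      then have "\<forall>\<^sub>F n in sequentially. ereal (X n) \<le> ereal c" by (auto elim: eventually_mono)
      then have "limsup X \<le> ereal c" by (rule Limsup_bounded)
      with z2 c show False by (metis ereal_less_eq(3) le_less_trans less_eq_real_def not_le)
    next
      assume "\<forall>\<^sub>F n in sequentially. c \<le> X n"
      then have "\<forall>\<^sub>F n in sequentially. ereal c \<le> ereal (X n)" by (auto elim: eventually_mono)
      then have "ereal c \<le> liminf X" by (rule Liminf_bounded)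
      with z1 c show False by (metis ereal_less_eq(3) less_le_trans less_eq_real_def not_le)
    qed
  qed
  have l0: "ereal 0 \<le> liminf X" by (rule Liminf_bounded) (use b in auto)
  have lM: "limsup X \<le> ereal M" by (rule Limsup_bounded) (use b in auto)
  obtain L where L: "limsup X = ereal L" using l0 lM eq
    by (cases "limsup X") auto
  have "X \<longlonglongrightarrow> L"
    by (rule limsup_le_liminf_real) (use L eq in auto)
  then show ?thesis by (auto simp: convergent_def)
qed



lemma efar_lemma:
  fixes L :: "'a::euclidean_space set"
  assumes "convex L" "L \<noteq> {}" "x \<notin> L" "0 < \<rho>"
  shows "\<exists>p. dist p x = \<rho> \<and> (\<forall>y\<in>L. \<rho> \<le> dist p y)"
proof -
  obtain a b where a: "a \<noteq> 0" "a \<bullet> x \<le> b" "\<And>y. y \<in> L \<Longrightarrow> a \<bullet> y \<ge> b"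
    using separating_hyperplane_set_point_inaff[OF assms(1-3)] by metis
  define u where "u = a /\<^sub>R norm a"
  have nu: "norm u = 1" using a(1) by (simp add: u_def)
  define p where "p = x - \<rho> *\<^sub>R u"
  have "dist p x = \<rho>" using nu assms(4) by (simp add: p_def dist_norm)
  moreover have "\<rho> \<le> dist p y" if "y \<in> L" for y
  proof -
    have "u \<bullet> y \<ge> u \<bullet> x" using a(2) a(3)[OF that] a(1)
      by (simp add: u_def divide_right_mono)
    then have "\<rho> \<le> u \<bullet> (y - p)" using nu
      by (simp add: p_def inner_diff_right dot_square_norm power2_eq_square)
    also have "\<dots> \<le> norm u * norm (y - p)" by (rule norm_cauchy_schwarz)
    finally show ?thesis using nu by (simp add: dist_norm norm_minus_commute)
  qed
  ultimately show ?thesis by blast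
qed



lemma quasi_subseq:
  fixes f :: "nat \<Rightarrow> 'a::euclidean_space \<Rightarrow> real" and A :: "'a set"
  assumes qc: "\<And>n c. convex {x\<in>A. f n x < c}"
    and bnd: "AE x in lebesgue. x \<in> A \<longrightarrow> (\<forall>n. 0 \<le> f n x \<and> f n x \<le> M)"
  shows "\<exists>s \<phi>. strict_mono s \<and> (AE x in lebesgue. x \<in> A \<longrightarrow> (\<lambda>n. f (s n) x) \<longlonglongrightarrow> \<phi> x)"
proof -
  define L where "L n c = {x\<in>A. f n x < c}" for n c
  define e where "e n c x = (if L n c = {} then 1 else min 1 (infdist x (L n c)))" for n c x
  have e01: "0 \<le> e n c x \<and> e n c x \<le> 1" for n c x
    by (simp add: e_def infdist_nonneg)
  have eLip: "\<bar>e n c x - e n c y\<bar> \<le> dist x y" for n c x y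
  proof (cases "L n c = {}")
    case True then show ?thesis by (simp add: e_def)
  next
    case False
    have "\<bar>infdist x (L n c) - infdist y (L n c)\<bar> \<le> dist x y" by (rule infdist_triangle_abs)
    then show ?thesis using False by (simp add: e_def min_def abs_le_iff)
  qed
  have epos: "x \<notin> L n c" if "0 < e n c x" for n c x
    using that by (auto simp: e_def split: if_splits)
  have esmall: "\<exists>a\<in>L n c. dist x a < \<delta>" if "e n c x < \<delta>" "\<delta> \<le> 1" for n c x \<delta>
  proof -
    have ne: "L n c \<noteq> {}" using that by (auto simp: e_def)
    then have "infdist x (L n c) < \<delta>" using that by (simp add: e_def min_def split: if_splits)
    then show ?thesis using ne by (simp add: infdist_notempty cINF_less_iff)
  qed
  have efar: "\<exists>p. dist p x = \<rho> \<and> \<rho> \<le> e n c p" if h: "x \<notin> L n c" "0 < \<rho>" "\<rho> \<le> 1" for n c x \<rho>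
  proof (cases "L n c = {}")
    case True
    obtain p :: 'a where "dist p x = \<rho>"
      using vector_choose_dist[of \<rho> x] h(2) by (auto simp: dist_commute)
    then show ?thesis using True h by (auto simp: e_def)
  next
    case False
    have cv: "convex (L n c)" using qc by (simp add: L_def)
    obtain p where p: "dist p x = \<rho>" "\<forall>y\<in>L n c. \<rho> \<le> dist p y"
      using efar_lemma[OF cv False h(1,2)] by blast
    have "\<rho> \<le> infdist p (L n c)" using False p(2)
      by (simp add: infdist_notempty le_cINF_iff)
    then show ?thesis using p(1) h False by (auto simp: e_def)
  qed
  obtain D :: "'a set" where D: "countable D" "\<And>X. open X \<Longrightarrow> X \<noteq> {} \<Longrightarrow> \<exists>d\<in>D. d \<in> X"
    using countable_dense_setE by blast
  have Dne: "D \<noteq> {}" using D(2)[of UNIV] by auto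
  define P :: "(real \<times> 'a) set" where "P = \<rat> \<times> D"
  have cP: "countable P" unfolding P_def using D(1) countable_rat by (intro countable_SIGMA) auto
  have Pne: "P \<noteq> {}" using Dne by (auto simp: P_def)
  define ix :: "nat \<Rightarrow> real \<times> 'a" where "ix = from_nat_into P"
  obtain s where s: "strict_mono s" "\<And>k. convergent (\<lambda>n. e (s n) (fst (ix k)) (snd (ix k)))"
    using diag_conv[of "\<lambda>k n. e n (fst (ix k)) (snd (ix k))" 1] e01 by fastforce
  have convD: "convergent (\<lambda>n. e (s n) c q)" if h: "c \<in> \<rat>" "q \<in> D" for c q
  proof -
    obtain k where "ix k = (c, q)" using from_nat_into_surj[OF cP, of "(c,q)"] h
      by (auto simp: ix_def P_def)
    then show ?thesis using s(2)[of k] by simp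
  qed
  have conv: "convergent (\<lambda>n. e (s n) c x)" if "c \<in> \<rat>" for c x
  proof -
    have "Cauchy (\<lambda>n. e (s n) c x)"
    proof (rule metric_CauchyI)
      fix \<epsilon> :: real assume "0 < \<epsilon>"
      obtain q where q: "q \<in> D" "q \<in> ball x (\<epsilon>/3)" using D(2)[of "ball x (\<epsilon>/3)"] \<open>0 < \<epsilon>\<close> by auto
      have "Cauchy (\<lambda>n. e (s n) c q)" using convD[OF that q(1)] by (rule convergent_Cauchy)
      then obtain N where N: "\<And>m n. m \<ge> N \<Longrightarrow> n \<ge> N \<Longrightarrow> dist (e (s m) c q) (e (s n) c q) < \<epsilon>/3"
        using \<open>0 < \<epsilon>\<close> metric_CauchyD[of "\<lambda>n. e (s n) c q" "\<epsilon>/3"] by auto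
      show "\<exists>N. \<forall>m\<ge>N. \<forall>n\<ge>N. dist (e (s m) c x) (e (s n) c x) < \<epsilon>"
      proof (intro exI allI impI)
        fix m n assume "m \<ge> N" "n \<ge> N"
        have 1: "\<bar>e (s m) c x - e (s m) c q\<bar> < \<epsilon>/3" using eLip[of "s m" c x q] q(2) by (simp add: dist_commute)
        have 2: "\<bar>e (s n) c x - e (s n) c q\<bar> < \<epsilon>/3" using eLip[of "s n" c x q] q(2) by (simp add: dist_commute)
        have 3: "\<bar>e (s m) c q - e (s n) c q\<bar> < \<epsilon>/3" using N[OF \<open>m \<ge> N\<close> \<open>n \<ge> N\<close>] by (simp add: dist_real_def)
        show "dist (e (s m) c x) (e (s n) c x) < \<epsilon>" using 1 2 3 unfolding dist_real_def by linarith
      qed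
    qed
    then show ?thesis by (simp add: Cauchy_convergent_iff)
  qed
  define E where "E c x = lim (\<lambda>n. e (s n) c x)" for c x
  have Elim: "(\<lambda>n. e (s n) c x) \<longlonglongrightarrow> E c x" if "c \<in> \<rat>" for c x
    using conv[OF that] by (simp add: E_def convergent_LIMSEQ_iff)
  have E0: "0 \<le> E c x" if "c \<in> \<rat>" for c x
    by (rule LIMSEQ_le_const[OF Elim[OF that]]) (use e01 in auto)
  define Z where "Z c = {x. E c x = 0}" for c
  have Zconv: "convex (Z c)" if c: "c \<in> \<rat>" for c
  proof (rule convexI)
    fix x y :: 'a
    fix u v :: real
    assume xy: "x \<in> Z c" "y \<in> Z c" and uv: "0 \<le> u" "0 \<le> v" "u + v = 1"
    define z where "z = u *\<^sub>R x + v *\<^sub>R y"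
    have bound: "E c z \<le> \<delta>" if dl: "0 < \<delta>" "\<delta> \<le> 1" for \<delta>
    proof (rule tendsto_upperbound[OF Elim[OF c]])
      have "\<forall>\<^sub>F n in sequentially. e (s n) c x < \<delta>"
        using Elim[OF c, of x] xy(1) dl(1) by (auto simp: Z_def dest: order_tendstoD(2))
      moreover have "\<forall>\<^sub>F n in sequentially. e (s n) c y < \<delta>"
        using Elim[OF c, of y] xy(2) dl(1) by (auto simp: Z_def dest: order_tendstoD(2))
      ultimately show "\<forall>\<^sub>F n in sequentially. e (s n) c z \<le> \<delta>"
      proof eventually_elim
        case (elim n)
        obtain a where a: "a \<in> L (s n) c" "dist x a < \<delta>" using esmall[OF elim(1) dl(2)] by blast
        obtain b where b: "b \<in> L (s n) c" "dist y b < \<delta>" using esmall[OF elim(2) dl(2)] by blast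
        define w where "w = u *\<^sub>R a + v *\<^sub>R b"
        have wL: "w \<in> L (s n) c" using qc[of "s n" c] a(1) b(1) uv
          unfolding w_def L_def convex_def by blast
        have "z - w = u *\<^sub>R (x - a) + v *\<^sub>R (y - b)" by (simp add: z_def w_def algebra_simps)
        then have "dist z w \<le> u * dist x a + v * dist y b"
          using uv by (metis dist_norm norm_triangle_ineq norm_scaleR abs_of_nonneg)
        also have "\<dots> \<le> u * \<delta> + v * \<delta>"
          using a(2) b(2) uv by (intro add_mono mult_left_mono) auto
        also have "\<dots> = \<delta>" using uv by (metis distrib_right mult_1)
        finally have dzw: "dist z w \<le> \<delta>" .
        have ne: "L (s n) c \<noteq> {}" using wL by auto
        have "infdist z (L (s n) c) \<le> dist z w" using wL by (rule infdist_le)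
        then show ?case using ne dzw by (simp add: e_def)
      qed
    qed simp
    have "E c z = 0"
    proof (rule ccontr)
      assume "E c z \<noteq> 0"
      then have pos: "0 < E c z" using E0[OF c, of z] by simp
      have "E c z \<le> min 1 (E c z / 2)" using pos by (intro bound) auto
      then show False using pos by (simp add: min_def split: if_splits)
    qed
    then show "u *\<^sub>R x + v *\<^sub>R y \<in> Z c" by (simp add: Z_def z_def)
  qed
  have decide: "(\<forall>\<^sub>F n in sequentially. f (s n) x < c) \<or> (\<forall>\<^sub>F n in sequentially. c \<le> f (s n) x)"
    if x: "x \<in> A" "x \<notin> frontier (Z c)" and c: "c \<in> \<rat>" for x c
  proof (cases "x \<in> interior (Z c)")
    case True
    then obtain \<epsilon> where \<epsilon>: "0 < \<epsilon>" "ball x \<epsilon> \<subseteq> Z c" by (meson mem_interior)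
    define \<rho> where "\<rho> = min (\<epsilon>/2) 1"
    have \<rho>: "0 < \<rho>" "\<rho> \<le> 1" "\<rho> < \<epsilon>" using \<epsilon> by (auto simp: \<rho>_def)
    have cov: "sphere x \<rho> \<subseteq> (\<Union>q\<in>sphere x \<rho>. ball q (\<rho>/4))" using \<rho> by force
    obtain F where F: "F \<subseteq> sphere x \<rho>" "finite F" "sphere x \<rho> \<subseteq> (\<Union>q\<in>F. ball q (\<rho>/4))"
      using compactE_image[OF compact_sphere _ cov] by blast
    have "\<forall>q\<in>F. \<forall>\<^sub>F n in sequentially. e (s n) c q < \<rho>/4"
    proof
      fix q assume "q \<in> F"
      then have "q \<in> ball x \<epsilon>" using F(1) \<rho> by auto
      then have "E c q = 0" using \<epsilon>(2) by (auto simp: Z_def)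
      then show "\<forall>\<^sub>F n in sequentially. e (s n) c q < \<rho>/4"
      proof -
        have "(\<lambda>n. e (s n) c q) \<longlonglongrightarrow> 0" using Elim[OF c, of q] \<open>E c q = 0\<close> by simp
        then show ?thesis using \<rho>(1) by (intro order_tendstoD(2)) auto
      qed
    qed
    then have "\<forall>\<^sub>F n in sequentially. \<forall>q\<in>F. e (s n) c q < \<rho>/4"
      using F(2) by (rule eventually_ball_finite[rotated])
    then have "\<forall>\<^sub>F n in sequentially. f (s n) x < c"
    proof eventually_elim
      case (elim n)
      show ?case
      proof (rule ccontr)
        assume "\<not> f (s n) x < c"
        then have "x \<notin> L (s n) c" by (simp add: L_def)
        then obtain p where p: "dist p x = \<rho>" "\<rho> \<le> e (s n) c p" using efar \<rho> by blast
        then have "p \<in> sphere x \<rho>" by (simp add: dist_commute)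
        then obtain q where q: "q \<in> F" "dist q p < \<rho>/4" using F(3) by auto
        have "\<bar>e (s n) c p - e (s n) c q\<bar> \<le> dist p q" by (rule eLip)
        then show False using q elim[rule_format, OF q(1)] p(2) by (simp add: dist_commute)
      qed
    qed
    then show ?thesis by blast
  next
    case False
    then have "x \<notin> closure (Z c)" using x(2) by (simp add: frontier_def)
    then have "x \<notin> Z c" using closure_subset by blast
    then have "0 < E c x" using E0[OF c, of x] by (simp add: Z_def)
    then have "\<forall>\<^sub>F n in sequentially. 0 < e (s n) c x" using Elim[OF c, of x] by (rule order_tendstoD(1)[rotated])
    then have "\<forall>\<^sub>F n in sequentially. c \<le> f (s n) x"
      by eventually_elim (use epos x(1) in \<open>force simp: L_def\<close>)
    then show ?thesis by blast
  qed
  have fr: "AE x in lebesgue. \<forall>c\<in>\<rat>. x \<notin> frontier (Z c)"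
  proof (subst AE_ball_countable)
    show "countable (\<rat> :: real set)" by (rule countable_rat)
    show "\<forall>c\<in>\<rat>. AE x in lebesgue. x \<notin> frontier (Z c)"
    proof
      fix c :: real assume "c \<in> \<rat>"
      then have "negligible (frontier (Z c))" using Zconv by (intro negligible_convex_frontier) auto
      then have "frontier (Z c) \<in> null_sets lebesgue" by (simp add: negligible_iff_null_sets)
      then show "AE x in lebesgue. x \<notin> frontier (Z c)" by (rule AE_not_in)
    qed
  qed
  define \<phi> where "\<phi> x = lim (\<lambda>n. f (s n) x)" for x
  have "AE x in lebesgue. x \<in> A \<longrightarrow> (\<lambda>n. f (s n) x) \<longlonglongrightarrow> \<phi> x"
    using bnd fr
  proof eventually_elim
    case (elim x)
    show ?case
    proof
      assume xA: "x \<in> A"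
      have "convergent (\<lambda>n. f (s n) x)"
      proof (rule conv_decide)
        show "0 \<le> f (s n) x \<and> f (s n) x \<le> M" for n using elim(1) xA by blast
        show "(\<forall>\<^sub>F n in sequentially. f (s n) x < c) \<or> (\<forall>\<^sub>F n in sequentially. c \<le> f (s n) x)"
          if "c \<in> \<rat>" for c using decide[OF xA _ that] elim(2) that by blast
      qed
      then show "(\<lambda>n. f (s n) x) \<longlonglongrightarrow> \<phi> x" by (simp add: \<phi>_def convergent_LIMSEQ_iff)
    qed
  qed
  with s(1) show ?thesis by blast
qed



lemma subgrad:
  fixes W :: "'a::euclidean_space \<Rightarrow> real"
  assumes cv: "convex_on A W" and x: "x \<in> A" and y: "y \<in> A"
    and d: "(W has_derivative (\<lambda>h. g \<bullet> h)) (at x)"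
  shows "W x + g \<bullet> (y - x) \<le> W y"
proof -
  define h where "h s = W (x + s *\<^sub>R (y - x))" for s :: real
  have "((\<lambda>s. x + s *\<^sub>R (y - x)) has_derivative (\<lambda>s. s *\<^sub>R (y - x))) (at 0)"
    by (auto intro!: derivative_eq_intros)
  then have "(h has_derivative (\<lambda>s. g \<bullet> (s *\<^sub>R (y - x)))) (at 0)"
  proof -
    have d0: "(W has_derivative (\<lambda>h. g \<bullet> h)) (at (x + 0 *\<^sub>R (y - x)))" using d by simp
    from diff_chain_at[OF \<open>((\<lambda>s. x + s *\<^sub>R (y - x)) has_derivative (\<lambda>s. s *\<^sub>R (y - x))) (at 0)\<close> d0]
    show ?thesis by (simp add: h_def[abs_def] o_def)
  qed
  then have "(h has_field_derivative (g \<bullet> (y - x))) (at 0)"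
    by (simp add: has_field_derivative_def mult.commute[of _ "g \<bullet> (y - x)"])
  then have lim: "((\<lambda>s. (h s - h 0) / (s - 0)) \<longlongrightarrow> g \<bullet> (y - x)) (at_right 0)"
    by (simp add: has_field_derivative_iff filterlim_at_split)
  have "\<forall>\<^sub>F s in at_right 0. (h s - h 0) / (s - 0) \<le> W y - W x"
  proof -
    have "\<forall>\<^sub>F s in at_right (0::real). s < 1"
      using eventually_at_right[of "0::real" 1] by (auto intro!: exI[of _ 1])
    then show ?thesis
    proof (rule eventually_mono[OF eventually_conj[OF _ eventually_at_right_less]])
      fix s :: real assume "s < 1 \<and> 0 < s"
      then have s: "0 < s" "s < 1" by auto
      have "x + s *\<^sub>R (y - x) = (1 - s) *\<^sub>R x + s *\<^sub>R y" by (simp add: algebra_simps)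
      then have "h s \<le> (1 - s) * W x + s * W y"
        unfolding h_def using convex_onD[OF cv, of s x y] s x y by simp
      then have "h s - h 0 \<le> s * (W y - W x)" by (simp add: h_def algebra_simps)
      then show "(h s - h 0) / (s - 0) \<le> W y - W x" using s by (simp add: divide_le_eq mult.commute)
    qed
  qed
  then have "g \<bullet> (y - x) \<le> W y - W x"
    by (rule tendsto_upperbound[OF lim]) simp
  then show ?thesis by simp
qed



lemma phi_bound:
  fixes w r K Dm :: real
  assumes w: "0 \<le> w" "w \<le> (r powr real n * r) * Dm" and r: "0 \<le> r" "r \<le> K"
    and Dm: "0 \<le> Dm" "Dm \<le> K" and K: "1 \<le> K"
  shows "((real n + 2) * w) powr (1 / (real n + 2)) \<le> 2 * K"
proof -
  define t where "t = real n"
  have K0: "0 < K" using K by simp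
  have "r powr t \<le> K powr t" using r by (intro powr_mono2) (auto simp: t_def)
  then have "r powr t * r * Dm \<le> K powr t * K * K"
    using r Dm by (intro mult_mono) auto
  also have "\<dots> = K powr (t + 2)" using K0 by (simp add: powr_add powr_numeral power2_eq_square)
  finally have wK: "w \<le> K powr (t + 2)" using w by (simp add: t_def)
  have "real (n + 2) < 2 ^ (n + 2)" by (rule of_nat_less_two_power)
  then have t2: "t + 2 \<le> 2 powr (t + 2)"
    by (simp add: t_def powr_add powr_realpow)
  have "(t + 2) * w \<le> 2 powr (t + 2) * K powr (t + 2)"
    using wK t2 w by (intro mult_mono) (auto simp: t_def)
  also have "\<dots> = (2 * K) powr (t + 2)" using K0 by (simp add: powr_mult)
  finally have "((t + 2) * w) powr (1 / (t + 2)) \<le> ((2 * K) powr (t + 2)) powr (1 / (t + 2))"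
    using w by (intro powr_mono2) (auto simp: t_def)
  also have "\<dots> = 2 * K" using K0 by (simp add: powr_powr t_def)
  finally show ?thesis by (simp add: t_def)
qed



lemma S_pow_meas: "S_pow t \<in> borel_measurable (lebesgue :: 'a::euclidean_space measure)"
proof -
  have "S_pow t \<in> borel_measurable (borel :: 'a measure)" unfolding S_pow_def[abs_def] by measurable
  then have "S_pow t \<in> borel_measurable (lborel :: 'a measure)" by simp
  then show ?thesis by (rule measurable_completion)
qed

theorem corollary3:
  fixes A :: "'a::euclidean_space set"
    and rho0 rho1 :: "'a \<Rightarrow> real"
    and r :: real
    and W :: "real \<Rightarrow> 'a \<Rightarrow> real"
  assumes dim: "DIM('a) \<ge> 2"
    and A: "compact A" "convex A"
    and rho0_meas: "rho0 \<in> borel_measurable lebesgue"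
    and rho0_nonneg: "\<And>x. 0 \<le> rho0 x"
    and rho0_supp: "\<And>x. x \<notin> A \<Longrightarrow> rho0 x = 0"
    and rho0_pos: "AE x in lebesgue. x \<in> A \<longrightarrow> 0 < rho0 x"
    and mu_prob: "prob_space (density lebesgue (\<lambda>x. ennreal (rho0 x)))"
    and rho1_meas: "rho1 \<in> borel_measurable lebesgue"
    and rho1_nonneg: "\<And>x. 0 \<le> rho1 x"
    and rho1_supp: "\<And>x. x \<notin> cball 0 r \<Longrightarrow> rho1 x = 0"
    and rho1_pos: "AE x in lebesgue. x \<in> cball 0 r \<longrightarrow> 0 < rho1 x"
    and nu_prob: "prob_space (density lebesgue (\<lambda>x. ennreal (rho1 x)))"
    and W: "\<And>t. 0 \<le> t \<Longrightarrow> brenier_potential A rho0 rho1 t (W t)"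
  shows "\<exists>(tn :: nat \<Rightarrow> real) (\<phi> :: 'a \<Rightarrow> real).
           filterlim tn at_top sequentially \<and>
           (AE x in lebesgue. x \<in> A \<longrightarrow>
              (\<lambda>n. phi_of (W (tn n)) (tn n) x) \<longlonglongrightarrow> \<phi> x)"
proof -
  define r' where "r' = max r 0"
  have r'0: "0 \<le> r'" by (simp add: r'_def)
  have bA: "bounded A" using A(1) by (rule compact_imp_bounded)
  define Dm where "Dm = diameter A"
  have Dm0: "0 \<le> Dm" using bA by (simp add: Dm_def diameter_ge_0)
  define K where "K = max 1 (max r' Dm)"
  define f where "f n x = phi_of (W (real n)) (real n) x" for n x
  have Wn: "brenier_potential A rho0 rho1 (real n) (W (real n))" for n by (rule W) simp
  have qc: "convex {x\<in>A. f n x < c}" for n c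
  proof (rule convexI)
    fix x y :: 'a and u v :: real
    assume x: "x \<in> {x\<in>A. f n x < c}" and y: "y \<in> {x\<in>A. f n x < c}"
      and uv: "0 \<le> u" "0 \<le> v" "u + v = 1"
    have cv: "convex_on A (W (real n))" and W0: "\<forall>x\<in>A. 0 \<le> W (real n) x"
      using Wn[of n] by (auto simp: brenier_potential_def)
    have zA: "u *\<^sub>R x + v *\<^sub>R y \<in> A" using x y uv A(2) by (auto simp: convex_def)
    have "W (real n) (u *\<^sub>R x + v *\<^sub>R y) \<le> u * W (real n) x + v * W (real n) y"
      using cv x y uv by (auto simp: convex_on_def)
    also have "\<dots> \<le> u * max (W (real n) x) (W (real n) y) + v * max (W (real n) x) (W (real n) y)"
      using uv by (intro add_mono mult_left_mono) auto
    also have "\<dots> = max (W (real n) x) (W (real n) y)" using uv by (metis distrib_right mult_1)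
    finally have le: "W (real n) (u *\<^sub>R x + v *\<^sub>R y) \<le> max (W (real n) x) (W (real n) y)" .
    have "f n (u *\<^sub>R x + v *\<^sub>R y) \<le> ((real n + 2) * max (W (real n) x) (W (real n) y)) powr (1 / (real n + 2))"
      unfolding f_def phi_of_def using le W0 zA by (intro powr_mono2 mult_left_mono) auto
    also have "\<dots> \<le> max (f n x) (f n y)"
    proof (cases "W (real n) x \<le> W (real n) y")
      case True then have "max (W (real n) x) (W (real n) y) = W (real n) y" by (rule max_absorb2)
      then show ?thesis unfolding f_def phi_of_def by (simp only:)
    next
      case False then have "max (W (real n) x) (W (real n) y) = W (real n) x" by (intro max_absorb1) simp
      then show ?thesis unfolding f_def phi_of_def by (simp only:)
    qed
    finally show "u *\<^sub>R x + v *\<^sub>R y \<in> {x\<in>A. f n x < c}" using x y zA by auto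
  qed
  have bndn: "AE x in lebesgue. x \<in> A \<longrightarrow> 0 \<le> f n x \<and> f n x \<le> 2 * K" for n
  proof -
    define t where "t = real n"
    obtain G :: "'a \<Rightarrow> 'a" where
      Gm: "G \<in> borel_measurable (density lebesgue (\<lambda>x. ennreal (rho0 x)))" and
      Gd: "AE x in density lebesgue (\<lambda>x. ennreal (rho0 x)). (W t has_derivative (\<lambda>h. G x \<bullet> h)) (at x)" and
      Geq: "distr (density lebesgue (\<lambda>x. ennreal (rho0 x))) borel G =
            distr (density lebesgue (\<lambda>x. ennreal (rho1 x))) borel (S_pow t)" and
      cv: "convex_on A (W t)" and W0: "\<forall>x\<in>A. 0 \<le> W t x" and Wmin: "\<exists>x\<in>A. W t x = 0"
      using Wn[of n] unfolding brenier_potential_def t_def by blast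
    define R where "R = r' powr t * r'"
    define U where "U = {z::'a. R < norm z}"
    have "open U" unfolding U_def by (intro open_Collect_less continuous_intros)
    then have Ub: "U \<in> sets borel" by simp
    have Sm: "S_pow t \<in> measurable (density lebesgue (\<lambda>x. ennreal (rho1 x))) borel"
      using S_pow_meas by (simp only: measurable_density_eq1)
    have "emeasure (density lebesgue (\<lambda>x. ennreal (rho1 x))) (S_pow t -` U \<inter> space (density lebesgue (\<lambda>x. ennreal (rho1 x))))
          \<le> emeasure (density lebesgue (\<lambda>x. ennreal (rho1 x))) {y. r' < norm y}"
    proof (rule emeasure_mono)
      show "S_pow t -` U \<inter> space (density lebesgue (\<lambda>x. ennreal (rho1 x))) \<subseteq> {y. r' < norm y}"
      proof (rule subsetI)
        fix y assume "y \<in> S_pow t -` U \<inter> space (density lebesgue (\<lambda>x. ennreal (rho1 x)))"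
        then have yU: "R < norm (S_pow t y)" by (simp add: U_def)
        show "y \<in> {y. r' < norm y}"
        proof (rule ccontr)
          assume "y \<notin> {y. r' < norm y}"
          then have "norm y \<le> r'" by simp
          then have "norm y powr t * norm y \<le> r' powr t * r'"
            by (intro mult_mono powr_mono2) (auto simp: t_def)
          then show False using yU by (simp add: S_pow_def R_def)
        qed
      qed
      show "{y. r' < norm y} \<in> sets (density lebesgue (\<lambda>x. ennreal (rho1 x)))" by simp
    qed
    also have "\<dots> = 0"
    proof -
      have "emeasure (density lebesgue (\<lambda>x. ennreal (rho1 x))) {y. r' < norm y}
          = (\<integral>\<^sup>+ x. ennreal (rho1 x) * indicator {y. r' < norm y} x \<partial>lebesgue)"
        using rho1_meas by (intro emeasure_density) auto
      also have "\<dots> = (\<integral>\<^sup>+ x. 0 \<partial>(lebesgue :: 'a measure))"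
      proof (intro nn_integral_cong)
        fix x :: 'a
        show "ennreal (rho1 x) * indicator {y. r' < norm y} x = 0"
        proof (cases "r' < norm x")
          case True then have "x \<notin> cball 0 r" by (simp add: r'_def)
          then show ?thesis using rho1_supp by simp
        qed simp
      qed
      finally show ?thesis by simp
    qed
    finally have nu0: "emeasure (density lebesgue (\<lambda>x. ennreal (rho1 x))) (S_pow t -` U \<inter> space (density lebesgue (\<lambda>x. ennreal (rho1 x)))) = 0"
      by simp
    have mu0: "emeasure (density lebesgue (\<lambda>x. ennreal (rho0 x))) (G -` U \<inter> space (density lebesgue (\<lambda>x. ennreal (rho0 x)))) = 0"
      using nu0 emeasure_distr[OF Gm Ub] emeasure_distr[OF Sm Ub] Geq by simp
    have GmU: "G -` U \<inter> space (density lebesgue (\<lambda>x. ennreal (rho0 x))) \<in> sets (density lebesgue (\<lambda>x. ennreal (rho0 x)))"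
      using Gm Ub by (rule measurable_sets)
    have "AE x in density lebesgue (\<lambda>x. ennreal (rho0 x)). norm (G x) \<le> R"
      by (rule AE_I'[of "G -` U \<inter> space (density lebesgue (\<lambda>x. ennreal (rho0 x)))"])
         (use mu0 GmU in \<open>auto simp: U_def not_le\<close>)
    with Gd have "AE x in density lebesgue (\<lambda>x. ennreal (rho0 x)). norm (G x) \<le> R \<and> (W t has_derivative (\<lambda>h. G x \<bullet> h)) (at x)"
      by eventually_elim auto
    then have "AE x in lebesgue. 0 < ennreal (rho0 x) \<longrightarrow> norm (G x) \<le> R \<and> (W t has_derivative (\<lambda>h. G x \<bullet> h)) (at x)"
      using rho0_meas by (subst (asm) AE_density) auto
    then show ?thesis using rho0_pos
    proof eventually_elim
      case (elim x)
      show ?case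
      proof
        assume xA: "x \<in> A"
        then have "norm (G x) \<le> R" and dx: "(W t has_derivative (\<lambda>h. G x \<bullet> h)) (at x)" using elim by auto
        obtain x0 where x0: "x0 \<in> A" "W t x0 = 0" using Wmin by blast
        have "W t x + G x \<bullet> (x0 - x) \<le> W t x0" by (rule subgrad[OF cv xA x0(1) dx])
        then have "W t x \<le> G x \<bullet> (x - x0)" using x0 by (simp add: inner_diff_right)
        also have "\<dots> \<le> norm (G x) * norm (x - x0)" by (rule norm_cauchy_schwarz)
        also have "\<dots> \<le> R * Dm"
        proof (rule mult_mono)
          show "norm (G x) \<le> R" by fact
          show "norm (x - x0) \<le> Dm" using diameter_bounded_bound[OF bA xA x0(1)] by (simp add: Dm_def dist_norm)
          show "0 \<le> R" by (simp add: R_def r'0)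
        qed simp
        finally have wle: "W t x \<le> (r' powr real n * r') * Dm" by (simp add: R_def t_def)
        have "((real n + 2) * W t x) powr (1 / (real n + 2)) \<le> 2 * K"
          by (rule phi_bound[OF _ wle r'0 _ Dm0]) (use W0 xA in \<open>auto simp: K_def\<close>)
        then show "0 \<le> f n x \<and> f n x \<le> 2 * K" by (simp add: f_def phi_of_def t_def)
      qed
    qed
  qed
  have bnd: "AE x in lebesgue. x \<in> A \<longrightarrow> (\<forall>n. 0 \<le> f n x \<and> f n x \<le> 2 * K)"
  proof -
    have "AE x in lebesgue. \<forall>n. x \<in> A \<longrightarrow> 0 \<le> f n x \<and> f n x \<le> 2 * K"
      unfolding AE_all_countable using bndn by blast
    then show ?thesis by eventually_elim blast
  qed
  obtain s \<phi> where s: "strict_mono s" and conv: "AE x in lebesgue. x \<in> A \<longrightarrow> (\<lambda>n. f (s n) x) \<longlonglongrightarrow> \<phi> x"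
    using quasi_subseq[OF qc bnd] by blast
  have "filterlim (\<lambda>n. real (s n)) at_top sequentially"
    using filterlim_compose[OF filterlim_real_sequentially filterlim_subseq[OF s]] by (simp add: o_def)
  moreover have "AE x in lebesgue. x \<in> A \<longrightarrow> (\<lambda>n. phi_of (W (real (s n))) (real (s n)) x) \<longlonglongrightarrow> \<phi> x"
    using conv by (simp add: f_def)
  ultimately show ?thesis by blast
qed

end
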